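(* Let $\varphi$ be a formula in variables $x_1,\dots,x_n$ and let $p$ be a variable distinct from $x_1,\dots,x_n$. Define the single $p$-negation transform $\varphi^{p}$ of $\varphi$ to be the formula obtained by replacing each occurrence of each variable $x_i$ by $(x_i\Rightarrow p)$ and each occurrence of the constant $\mathbf{0}$ by $p$, leaving $\vee,\wedge,\Rightarrow$ and $\mathbf{1}$ unchanged. If $\varphi$ is a subset tautology, then $\varphi^{p}$ is a partition tautology. In particular, the weak law of excluded middle $(x\Rightarrow p)\vee((x\Rightarrow p)\Rightarrow p)$ is a partition tautology.
   Context: Formulas are built from variables and the constants $\mathbf{0},\mathbf{1}$ using the binary connectives $\vee,\wedge,\Rightarrow$. A formula is a subset tautology if, for every nonempty set $U$ and every assignment of subsets of $U$ to the variables, it evaluates to $U$ when $\vee,\wedge$ are interpreted as $\cup,\cap$, $S\Rightarrow T$ as $(U\setminus S)\cup T$, $\mathbf{0}$ as $\emptyset$ and $\mathbf{1}$ as $U$. A partition on a set $U$ is a set of non-empty, pairwise disjoint subsets of $U$ (called blocks) whose union is $U$. The discrete partition is $\mathbf{1}=\{\{u\}:u\in U\}$ and the indiscrete partition is $\mathbf{0}=\{U\}$. The join $\pi\vee\sigma$ is the partition whose blocks are the non-empty intersections $B\cap C$, $B\in\pi$, $C\in\sigma$. The meet $\pi\wedge\sigma$ is the partition whose blocks are the equivalence classes of the equivalence relation on $U$ generated by: $u\sim u'$ if $u,u'$ lie in a common block of $\pi$ or in a common block of $\sigma$. The partition implication $\sigma\Rightarrow\pi$ is the partition obtained from $\pi$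 by replacing every block $B\in\pi$ that is contained in some block of $\sigma$ by the singletons $\{u\}$, $u\in B$, and leaving every block of $\pi$ not contained in any block of $\sigma$ unchanged. A formula is a partition tautology if, for every set $U$ with $|U|\ge 2$ and every assignment of partitions on $U$ to the variables, it evaluates to $\mathbf{1}$ when $\vee,\wedge,\Rightarrow,\mathbf{0},\mathbf{1}$ are interpreted as the partition join, meet, implication, indiscrete and discrete partitions. *)

theory Defs
  imports Main
begin

datatype form = Var nat | Zero | One | Join form form | Meet form form | Imp form form

fun vars :: "form \<Rightarrow> nat set" where
  "vars (Var i) = {i}"
| "vars Zero = {}"
| "vars One = {}"
| "vars (Join a b) = vars a \<union> vars b"
| "vars (Meet a b) = vars a \<union> vars b"
| "vars (Imp a b) = vars a \<union> vars b"

fun pneg :: "nat \<Rightarrow> form \<Rightarrow> form" where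
  "pneg p (Var i) = Imp (Var i) (Var p)"
| "pneg p Zero = Var p"
| "pneg p One = One"
| "pneg p (Join a b) = Join (pneg p a) (pneg p b)"
| "pneg p (Meet a b) = Meet (pneg p a) (pneg p b)"
| "pneg p (Imp a b) = Imp (pneg p a) (pneg p b)"

fun sval :: "'a set \<Rightarrow> (nat \<Rightarrow> 'a set) \<Rightarrow> form \<Rightarrow> 'a set" where
  "sval U v (Var i) = v i"
| "sval U v Zero = {}"
| "sval U v One = U"
| "sval U v (Join a b) = sval U v a \<union> sval U v b"
| "sval U v (Meet a b) = sval U v a \<inter> sval U v b"
| "sval U v (Imp a b) = (U - sval U v a) \<union> sval U v b"

definition subset_taut :: "'a itself \<Rightarrow> form \<Rightarrow> bool" where
  "subset_taut (T :: 'a itself) \<phi> \<longleftrightarrow>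
     (\<forall>(U :: 'a set) v. U \<noteq> {} \<longrightarrow> (\<forall>i. v i \<subseteq> U) \<longrightarrow> sval U v \<phi> = U)"

definition is_partition :: "'a set \<Rightarrow> 'a set set \<Rightarrow> bool" where
  "is_partition U \<pi> \<longleftrightarrow> (\<forall>B\<in>\<pi>. B \<noteq> {}) \<and>
     (\<forall>B\<in>\<pi>. \<forall>C\<in>\<pi>. B \<noteq> C \<longrightarrow> B \<inter> C = {}) \<and> \<Union>\<pi> = U"

definition discrete :: "'a set \<Rightarrow> 'a set set" where
  "discrete U = {{u} | u. u \<in> U}"

definition indiscrete :: "'a set \<Rightarrow> 'a set set" where
  "indiscrete U = {U}"

definition pjoin :: "'a set set \<Rightarrow> 'a set set \<Rightarrow> 'a set set" where
  "pjoin \<pi> \<sigma> = {B \<inter> C | B C. B \<in> \<pi> \<and> C \<in> \<sigma> \<and> B \<inter> C \<noteq> {}}"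

definition pmeet :: "'a set \<Rightarrow> 'a set set \<Rightarrow> 'a set set \<Rightarrow> 'a set set" where
  "pmeet U \<pi> \<sigma> =
     U // (({(u, u'). \<exists>B \<in> \<pi> \<union> \<sigma>. u \<in> B \<and> u' \<in> B})\<^sup>*)"

definition pimp :: "'a set set \<Rightarrow> 'a set set \<Rightarrow> 'a set set" where
  "pimp \<sigma> \<pi> =
     {B \<in> \<pi>. \<not> (\<exists>C \<in> \<sigma>. B \<subseteq> C)} \<union>
     {{u} | u. \<exists>B \<in> \<pi>. u \<in> B \<and> (\<exists>C \<in> \<sigma>. B \<subseteq> C)}"

fun pval :: "'a set \<Rightarrow> (nat \<Rightarrow> 'a set set) \<Rightarrow> form \<Rightarrow> 'a set set" where
  "pval U v (Var i) = v i"
| "pval U v Zero = indiscrete U"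
| "pval U v One = discrete U"
| "pval U v (Join a b) = pjoin (pval U v a) (pval U v b)"
| "pval U v (Meet a b) = pmeet U (pval U v a) (pval U v b)"
| "pval U v (Imp a b) = pimp (pval U v a) (pval U v b)"

definition partition_taut :: "'a itself \<Rightarrow> form \<Rightarrow> bool" where
  "partition_taut (T :: 'a itself) \<phi> \<longleftrightarrow>
     (\<forall>(U :: 'a set) v. (\<exists>u\<in>U. \<exists>u'\<in>U. u \<noteq> u') \<longrightarrow> (\<forall>i. is_partition U (v i)) \<longrightarrow>
        pval U v \<phi> = discrete U)"

end

theory Submission
  imports Defs
begin

fun ev :: "(nat \<Rightarrow> bool) \<Rightarrow> form \<Rightarrow> bool" where
  "ev b (Var i) = b i"
| "ev b Zero = False"
| "ev b One = True"
| "ev b (Join x y) = (ev b x \<or> ev b y)"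
| "ev b (Meet x y) = (ev b x \<and> ev b y)"
| "ev b (Imp x y) = (\<not> ev b x \<or> ev b y)"

lemma sval_ev: "sval UNIV (\<lambda>i. {z. b i}) \<phi> = {z. ev b \<phi>}"
  by (induction \<phi>) auto

lemma subset_taut_ev:
  assumes "subset_taut TYPE('a) \<phi>" shows "ev b \<phi>"
proof -
  have "sval (UNIV::'a set) (\<lambda>i. {z. b i}) \<phi> = UNIV"
    using assms unfolding subset_taut_def by auto
  then have "{z::'a. ev b \<phi>} = UNIV" by (simp only: sval_ev)
  then show ?thesis by blast
qed

definition part :: "'a set set \<Rightarrow> ('a set \<Rightarrow> bool) \<Rightarrow> 'a set set" where
  "part \<pi> f = {B \<in> \<pi>. \<not> f B} \<union> {{u} | u. \<exists>B\<in>\<pi>. u \<in> B \<and> f B}"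

definition sing :: "'a set \<Rightarrow> bool" where "sing B \<longleftrightarrow> (\<exists>u. B = {u})"

lemma part_mem: "X \<in> part \<pi> f \<longleftrightarrow> (X \<in> \<pi> \<and> \<not> f X) \<or> (\<exists>u B. X = {u} \<and> B \<in> \<pi> \<and> u \<in> B \<and> f B)"
  unfolding part_def by blast

lemma part_cong:
  assumes "\<forall>B\<in>\<pi>. (f B \<longleftrightarrow> g B) \<or> sing B"
  shows "part \<pi> f = part \<pi> g"
  using assms unfolding part_def sing_def by blast

lemma part_False: "part \<pi> (\<lambda>B. False) = \<pi>"
  unfolding part_def by auto

lemma part_True: "is_partition U \<pi> \<Longrightarrow> part \<pi> (\<lambda>B. True) = discrete U"
  unfolding part_def discrete_def is_partition_def by auto

lemma uniq: "is_partition U \<pi> \<Longrightarrow> B \<in> \<pi> \<Longrightarrow> B' \<in> \<pi> \<Longrightarrow> u \<in> B \<Longrightarrow> u \<in> B' \<Longrightarrow> B = B'"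
  unfolding is_partition_def by blast

lemma part_join:
  assumes P: "is_partition U \<pi>"
  shows "pjoin (part \<pi> f) (part \<pi> g) = part \<pi> (\<lambda>B. f B \<or> g B)"
proof (rule set_eqI)
  fix X
  show "X \<in> pjoin (part \<pi> f) (part \<pi> g) \<longleftrightarrow> X \<in> part \<pi> (\<lambda>B. f B \<or> g B)"
  proof
    assume "X \<in> pjoin (part \<pi> f) (part \<pi> g)"
    then obtain B C where X: "X = B \<inter> C" and B: "B \<in> part \<pi> f" and C: "C \<in> part \<pi> g"
      and ne: "B \<inter> C \<noteq> {}" unfolding pjoin_def by blast
    then obtain w where w: "w \<in> B" "w \<in> C" by blast
    have Bc: "(B \<in> \<pi> \<and> \<not> f B) \<or> (\<exists>u D. B = {u} \<and> D \<in> \<pi> \<and> u \<in> D \<and> f D)"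
      using B unfolding part_mem .
    have Cc: "(C \<in> \<pi> \<and> \<not> g C) \<or> (\<exists>u D. C = {u} \<and> D \<in> \<pi> \<and> u \<in> D \<and> g D)"
      using C unfolding part_mem .
    show "X \<in> part \<pi> (\<lambda>B. f B \<or> g B)"
    proof (cases "B \<in> \<pi> \<and> \<not> f B")
      case True
      show ?thesis
      proof (cases "C \<in> \<pi> \<and> \<not> g C")
        case True2: True
        then have "B = C" using True uniq[OF P, of B C w] w by blast
        then show ?thesis using X True True2 unfolding part_mem by auto
      next
        case False
        then obtain u D where "C = {u}" "D \<in> \<pi>" "u \<in> D" "g D" using Cc by blast
        then show ?thesis using X w unfolding part_mem by auto
      qed
    next
      case False
      then obtain u D where "B = {u}" "D \<in> \<pi>" "u \<in> D" "f D" using Bc by blast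
      then show ?thesis using X w unfolding part_mem by auto
    qed
  next
    assume "X \<in> part \<pi> (\<lambda>B. f B \<or> g B)"
    then have Xc: "(X \<in> \<pi> \<and> \<not> (f X \<or> g X)) \<or> (\<exists>u B. X = {u} \<and> B \<in> \<pi> \<and> u \<in> B \<and> (f B \<or> g B))"
      unfolding part_mem .
    show "X \<in> pjoin (part \<pi> f) (part \<pi> g)"
    proof (cases "X \<in> \<pi> \<and> \<not> (f X \<or> g X)")
      case True
      moreover have "X \<noteq> {}" using P True unfolding is_partition_def by blast
      ultimately show ?thesis unfolding pjoin_def part_mem by blast
    next
      case False
      then obtain u B where h: "X = {u}" "B \<in> \<pi>" "u \<in> B" "f B \<or> g B" using Xc by blast
      have m1: "{u} \<in> part \<pi> f \<or> B \<in> part \<pi> f" using h unfolding part_mem by blast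
      have m2: "{u} \<in> part \<pi> g \<or> B \<in> part \<pi> g" using h unfolding part_mem by blast
      have "{u} \<in> part \<pi> f \<or> {u} \<in> part \<pi> g" using h unfolding part_mem by blast
      then show ?thesis using m1 m2 h unfolding pjoin_def by blast
    qed
  qed
qed


lemma part_meet:
  assumes P: "is_partition U \<pi>"
  shows "pmeet U (part \<pi> f) (part \<pi> g) = part \<pi> (\<lambda>B. f B \<and> g B)"
proof -
  define R where "R = {(u, u'). \<exists>B \<in> part \<pi> f \<union> part \<pi> g. u \<in> B \<and> u' \<in> B}"
  define E where "E = {(u, u'). u = u' \<or> (\<exists>B\<in>\<pi>. u \<in> B \<and> u' \<in> B \<and> \<not> (f B \<and> g B))}"
  have RE: "R \<subseteq> E"
  proof
    fix z assume "z \<in> R"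
    then obtain u u' X where z: "z = (u, u')" and X: "X \<in> part \<pi> f \<or> X \<in> part \<pi> g" and "u \<in> X" "u' \<in> X"
      unfolding R_def by blast
    then show "z \<in> E" unfolding E_def part_mem by blast
  qed
  have Etr: "trans E"
  proof (rule transI)
    fix a b c assume ab: "(a, b) \<in> E" and bc: "(b, c) \<in> E"
    show "(a, c) \<in> E"
    proof (cases "a = b")
      case True then show ?thesis using bc by simp
    next
      case False
      then obtain B where B: "B \<in> \<pi>" "a \<in> B" "b \<in> B" "\<not> (f B \<and> g B)" using ab unfolding E_def by blast
      show ?thesis
      proof (cases "b = c")
        case True then show ?thesis using ab by simp
      next
        case False
        then obtain C where C: "C \<in> \<pi>" "b \<in> C" "c \<in> C" "\<not> (f C \<and> g C)" using bc unfolding E_def by blast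
        have "B = C" using uniq[OF P B(1) C(1) B(3) C(2)] .
        then show ?thesis using B C unfolding E_def by blast
      qed
    qed
  qed
  have "R\<^sup>* \<subseteq> E"
  proof
    fix z assume "z \<in> R\<^sup>*"
    then obtain a c where z: "z = (a, c)" and ac: "(a, c) \<in> R\<^sup>*" by (cases z) auto
    from ac have "(a, c) \<in> E"
    proof (induction rule: rtrancl_induct)
      case base then show ?case unfolding E_def by simp
    next
      case (step y w)
      then have "(y, w) \<in> E" using RE by blast
      then show ?case using step.IH Etr unfolding trans_def by blast
    qed
    then show "z \<in> E" using z by simp
  qed
  moreover have "E \<subseteq> R\<^sup>*"
  proof
    fix z assume "z \<in> E"
    then obtain a c where z: "z = (a, c)" and ac: "(a, c) \<in> E" by (cases z) auto
    show "z \<in> R\<^sup>*"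
    proof (cases "a = c")
      case True then show ?thesis using z by simp
    next
      case False
      then obtain B where B: "B \<in> \<pi>" "a \<in> B" "c \<in> B" "\<not> (f B \<and> g B)" using ac unfolding E_def by blast
      then have "B \<in> part \<pi> f \<union> part \<pi> g" unfolding Un_iff part_mem by blast
      then have "(a, c) \<in> R" using B unfolding R_def by blast
      then show ?thesis using z by blast
    qed
  qed
  ultimately have RsE: "R\<^sup>* = E" by blast
  have img: "E `` {u} = (if f B \<and> g B then {u} else B)" if "B \<in> \<pi>" "u \<in> B" for u B
  proof -
    have "E `` {u} = {u} \<union> {w. \<exists>C\<in>\<pi>. u \<in> C \<and> w \<in> C \<and> \<not> (f C \<and> g C)}"
      unfolding E_def by blast
    also have "{w. \<exists>C\<in>\<pi>. u \<in> C \<and> w \<in> C \<and> \<not> (f C \<and> g C)} = (if f B \<and> g B then {} else B)"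
    proof -
      have cb: "\<And>C. C \<in> \<pi> \<Longrightarrow> u \<in> C \<Longrightarrow> C = B" using uniq[OF P] that by blast
      show ?thesis
      proof (cases "f B \<and> g B")
        case True
        have "{w. \<exists>C\<in>\<pi>. u \<in> C \<and> w \<in> C \<and> \<not> (f C \<and> g C)} = {}"
        proof (rule equals0I)
          fix w assume "w \<in> {w. \<exists>C\<in>\<pi>. u \<in> C \<and> w \<in> C \<and> \<not> (f C \<and> g C)}"
          then obtain C where "C \<in> \<pi>" "u \<in> C" "\<not> (f C \<and> g C)" by blast
          then show False using cb[of C] True by simp
        qed
        then show ?thesis using True by simp
      next
        case False
        have eqB: "{w. \<exists>C\<in>\<pi>. u \<in> C \<and> w \<in> C \<and> \<not> (f C \<and> g C)} = B"
        proof (rule set_eqI, rule iffI)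
          fix w assume "w \<in> {w. \<exists>C\<in>\<pi>. u \<in> C \<and> w \<in> C \<and> \<not> (f C \<and> g C)}"
          then obtain C where "C \<in> \<pi>" "u \<in> C" "w \<in> C" by blast
          then show "w \<in> B" using cb[of C] by simp
        next
          fix w assume "w \<in> B"
          then show "w \<in> {w. \<exists>C\<in>\<pi>. u \<in> C \<and> w \<in> C \<and> \<not> (f C \<and> g C)}" using that False by blast
        qed
        show ?thesis unfolding if_not_P[OF False] by (fact eqB)
      qed
    qed
    finally show ?thesis using that by auto
  qed
  have "U // E = part \<pi> (\<lambda>B. f B \<and> g B)"
  proof (rule set_eqI)
    fix X
    show "X \<in> U // E \<longleftrightarrow> X \<in> part \<pi> (\<lambda>B. f B \<and> g B)"
    proof
      assume "X \<in> U // E"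
      then obtain u where u: "u \<in> U" and X: "X = E `` {u}" unfolding quotient_def by blast
      then obtain B where B: "B \<in> \<pi>" "u \<in> B" using P unfolding is_partition_def by blast
      show "X \<in> part \<pi> (\<lambda>B. f B \<and> g B)"
        using img[OF B] X B unfolding part_mem by (cases "f B \<and> g B") auto
    next
      assume "X \<in> part \<pi> (\<lambda>B. f B \<and> g B)"
      then have Xc: "(X \<in> \<pi> \<and> \<not> (f X \<and> g X)) \<or> (\<exists>u B. X = {u} \<and> B \<in> \<pi> \<and> u \<in> B \<and> (f B \<and> g B))"
        unfolding part_mem .
      show "X \<in> U // E"
      proof (cases "X \<in> \<pi> \<and> \<not> (f X \<and> g X)")
        case True
        have "X \<noteq> {}" using P True unfolding is_partition_def by blast
        then obtain u where uX: "u \<in> X" by blast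
        have uU: "u \<in> U" using P True uX unfolding is_partition_def by blast
        have "E `` {u} = X" using img[of X u] True uX by simp
        then show ?thesis using quotientI[OF uU, of E] by simp
      next
        case False
        then obtain u B where h: "X = {u}" "B \<in> \<pi>" "u \<in> B" "f B \<and> g B" using Xc by blast
        have uU: "u \<in> U" using P h unfolding is_partition_def by blast
        have "E `` {u} = X" using img[of B u] h by simp
        then show ?thesis using quotientI[OF uU, of E] by simp
      qed
    qed
  qed
  then show ?thesis unfolding pmeet_def using RsE unfolding R_def by simp
qed

lemma part_cont:
  assumes P: "is_partition U \<pi>" and X: "X \<in> part \<pi> G"
  shows "(\<exists>Y\<in>part \<pi> F. X \<subseteq> Y) \<longleftrightarrow> (sing X \<or> \<not> F X)"
proof
  assume "\<exists>Y\<in>part \<pi> F. X \<subseteq> Y"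
  then obtain Y where Y: "Y \<in> part \<pi> F" "X \<subseteq> Y" by blast
  show "sing X \<or> \<not> F X"
  proof (cases "X \<in> \<pi> \<and> \<not> G X")
    case True
    have "X \<noteq> {}" using P True unfolding is_partition_def by blast
    then obtain w where w: "w \<in> X" by blast
    have "(Y \<in> \<pi> \<and> \<not> F Y) \<or> (\<exists>u D. Y = {u} \<and> D \<in> \<pi> \<and> u \<in> D \<and> F D)" using Y(1) unfolding part_mem .
    then show ?thesis
    proof
      assume "Y \<in> \<pi> \<and> \<not> F Y"
      then have "X = Y" using uniq[OF P, of X Y w] True w Y(2) by blast
      then show ?thesis using \<open>Y \<in> \<pi> \<and> \<not> F Y\<close> by blast
    next
      assume "\<exists>u D. Y = {u} \<and> D \<in> \<pi> \<and> u \<in> D \<and> F D"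
      then obtain u where "Y = {u}" by blast
      then have "X = {u}" using Y(2) w by blast
      then show ?thesis unfolding sing_def by blast
    qed
  next
    case False
    then show ?thesis using X unfolding part_mem sing_def by blast
  qed
next
  assume h: "sing X \<or> \<not> F X"
  show "\<exists>Y\<in>part \<pi> F. X \<subseteq> Y"
  proof (cases "X \<in> \<pi> \<and> \<not> G X")
    case True
    show ?thesis
    proof (cases "F X")
      case False
      then have "X \<in> part \<pi> F" using True unfolding part_mem by blast
      then show ?thesis by blast
    next
      case True2: True
      then obtain u where "X = {u}" using h unfolding sing_def by blast
      then have "X \<in> part \<pi> F" using True True2 unfolding part_mem by blast
      then show ?thesis by blast
    qed
  next
    case False
    then obtain u D where u: "X = {u}" "D \<in> \<pi>" "u \<in> D" using X unfolding part_mem by blast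
    show ?thesis
    proof (cases "F D")
      case True
      then have "X \<in> part \<pi> F" using u unfolding part_mem by blast
      then show ?thesis by blast
    next
      case False
      then have "D \<in> part \<pi> F" using u unfolding part_mem by blast
      then show ?thesis using u by blast
    qed
  qed
qed

lemma part_imp:
  assumes P: "is_partition U \<pi>"
  shows "pimp (part \<pi> F) (part \<pi> G) = part \<pi> (\<lambda>B. G B \<or> \<not> F B \<or> sing B)"
proof -
  have "pimp (part \<pi> F) (part \<pi> G) =
     {X \<in> part \<pi> G. \<not> (sing X \<or> \<not> F X)} \<union>
     {{u} | u. \<exists>X \<in> part \<pi> G. u \<in> X \<and> (sing X \<or> \<not> F X)}"
  proof -
    have c: "\<And>X. X \<in> part \<pi> G \<Longrightarrow> (\<exists>Y\<in>part \<pi> F. X \<subseteq> Y) = (sing X \<or> \<not> F X)"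
      by (rule part_cont[OF P])
    have e1: "{X \<in> part \<pi> G. \<not> (\<exists>Y\<in>part \<pi> F. X \<subseteq> Y)} = {X \<in> part \<pi> G. \<not> (sing X \<or> \<not> F X)}"
      by (rule Collect_cong) (simp add: c cong: conj_cong)
    have e2: "{{u} | u. \<exists>X \<in> part \<pi> G. u \<in> X \<and> (\<exists>Y\<in>part \<pi> F. X \<subseteq> Y)} = {{u} | u. \<exists>X \<in> part \<pi> G. u \<in> X \<and> (sing X \<or> \<not> F X)}"
    proof -
      have "\<forall>u. (\<exists>X\<in>part \<pi> G. u \<in> X \<and> (\<exists>Y\<in>part \<pi> F. X \<subseteq> Y)) = (\<exists>X\<in>part \<pi> G. u \<in> X \<and> (sing X \<or> \<not> F X))"
      proof
        fix u
        show "(\<exists>X\<in>part \<pi> G. u \<in> X \<and> (\<exists>Y\<in>part \<pi> F. X \<subseteq> Y)) = (\<exists>X\<in>part \<pi> G. u \<in> X \<and> (sing X \<or> \<not> F X))"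
          by (rule bex_cong[OF refl]) (simp add: c)
      qed
      then show ?thesis by simp
    qed
    show ?thesis unfolding pimp_def e1 e2 by (rule refl)
  qed
  also have "\<dots> = part \<pi> (\<lambda>B. G B \<or> \<not> F B \<or> sing B)"
  proof (rule set_eqI)
    fix Z
    show "Z \<in> {X \<in> part \<pi> G. \<not> (sing X \<or> \<not> F X)} \<union>
     {{u} | u. \<exists>X \<in> part \<pi> G. u \<in> X \<and> (sing X \<or> \<not> F X)} \<longleftrightarrow> Z \<in> part \<pi> (\<lambda>B. G B \<or> \<not> F B \<or> sing B)"
    proof
      assume "Z \<in> {X \<in> part \<pi> G. \<not> (sing X \<or> \<not> F X)} \<union>
         {{u} | u. \<exists>X \<in> part \<pi> G. u \<in> X \<and> (sing X \<or> \<not> F X)}"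
      then consider (a) "Z \<in> part \<pi> G" "\<not> sing Z" "F Z"
        | (b) u X where "Z = {u}" "X \<in> part \<pi> G" "u \<in> X" "sing X \<or> \<not> F X" by blast
      then show "Z \<in> part \<pi> (\<lambda>B. G B \<or> \<not> F B \<or> sing B)"
      proof cases
        case a then show ?thesis unfolding part_mem sing_def by blast
      next
        case b
        have "(X \<in> \<pi> \<and> \<not> G X) \<or> (\<exists>u D. X = {u} \<and> D \<in> \<pi> \<and> u \<in> D \<and> G D)" using b(2) unfolding part_mem .
        then show ?thesis
        proof
          assume "X \<in> \<pi> \<and> \<not> G X" then show ?thesis using b unfolding part_mem by blast
        next
          assume "\<exists>u D. X = {u} \<and> D \<in> \<pi> \<and> u \<in> D \<and> G D"
          then show ?thesis using b unfolding part_mem by blast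
        qed
      qed
    next
      assume "Z \<in> part \<pi> (\<lambda>B. G B \<or> \<not> F B \<or> sing B)"
      then have "(Z \<in> \<pi> \<and> \<not> (G Z \<or> \<not> F Z \<or> sing Z)) \<or> (\<exists>u B. Z = {u} \<and> B \<in> \<pi> \<and> u \<in> B \<and> (G B \<or> \<not> F B \<or> sing B))"
        unfolding part_mem .
      then show "Z \<in> {X \<in> part \<pi> G. \<not> (sing X \<or> \<not> F X)} \<union>
         {{u} | u. \<exists>X \<in> part \<pi> G. u \<in> X \<and> (sing X \<or> \<not> F X)}"
      proof
        assume "Z \<in> \<pi> \<and> \<not> (G Z \<or> \<not> F Z \<or> sing Z)"
        then have "Z \<in> part \<pi> G" unfolding part_mem by blast
        then show ?thesis using \<open>Z \<in> \<pi> \<and> \<not> (G Z \<or> \<not> F Z \<or> sing Z)\<close> by blast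
      next
        assume "\<exists>u B. Z = {u} \<and> B \<in> \<pi> \<and> u \<in> B \<and> (G B \<or> \<not> F B \<or> sing B)"
        then obtain u B where h: "Z = {u}" "B \<in> \<pi>" "u \<in> B" "G B \<or> \<not> F B \<or> sing B" by blast
        show ?thesis
        proof (cases "G B")
          case True
          then have "{u} \<in> part \<pi> G" using h unfolding part_mem by blast
          moreover have "sing {u}" unfolding sing_def by blast
          ultimately show ?thesis using h by blast
        next
          case False
          then have "B \<in> part \<pi> G" using h unfolding part_mem by blast
          then show ?thesis using h False by blast
        qed
      qed
    qed
  qed
  finally show ?thesis .
qed

lemma pval_pneg:
  assumes P: "\<forall>i. is_partition U (v i)"
  shows "pval U v (pneg p \<psi>) = part (v p) (\<lambda>B. ev (\<lambda>i. \<exists>C\<in>v i. B \<subseteq> C) \<psi>)"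
proof (induction \<psi>)
  case (Var i)
  then show ?case by (simp add: pimp_def part_def)
next
  case Zero
  then show ?case by (simp add: part_False)
next
  case One
  then show ?case using part_True[of U "v p"] P by simp
next
  case (Join a b)
  then show ?case using part_join[of U "v p"] P by simp
next
  case (Meet a b)
  then show ?case using part_meet[of U "v p"] P by simp
next
  case (Imp a b)
  have "pval U v (pneg p (Imp a b)) = part (v p) (\<lambda>B. ev (\<lambda>i. \<exists>C\<in>v i. B \<subseteq> C) b \<or> \<not> ev (\<lambda>i. \<exists>C\<in>v i. B \<subseteq> C) a \<or> sing B)"
    using Imp part_imp[of U "v p"] P by simp
  also have "\<dots> = part (v p) (\<lambda>B. ev (\<lambda>i. \<exists>C\<in>v i. B \<subseteq> C) (Imp a b))"
    by (rule part_cong) auto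
  finally show ?case .
qed

lemma ev_taut_partition:
  assumes "\<And>b. ev b \<psi>"
  shows "partition_taut TYPE('a) (pneg p \<psi>)"
  unfolding partition_taut_def
proof (intro allI impI)
  fix U :: "'a set" and v :: "nat \<Rightarrow> 'a set set"
  assume "\<exists>u\<in>U. \<exists>u'\<in>U. u \<noteq> u'" and P: "\<forall>i. is_partition U (v i)"
  have "pval U v (pneg p \<psi>) = part (v p) (\<lambda>B. True)"
    using pval_pneg[OF P, of p \<psi>] assms by simp
  then show "pval U v (pneg p \<psi>) = discrete U" using part_True P by metis
qed

theorem mainTheorem9:
  fixes \<phi> :: form and p x :: nat
  shows "(subset_taut TYPE('a) \<phi> \<and> p \<notin> vars \<phi> \<longrightarrow> partition_taut TYPE('a) (pneg p \<phi>))
       \<and> (x \<noteq> p \<longrightarrow>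
            partition_taut TYPE('a) (Join (Imp (Var x) (Var p)) (Imp (Imp (Var x) (Var p)) (Var p))))"
proof (intro conjI impI)
  assume "subset_taut TYPE('a) \<phi> \<and> p \<notin> vars \<phi>"
  then show "partition_taut TYPE('a) (pneg p \<phi>)"
    using ev_taut_partition subset_taut_ev by blast
next
  have "partition_taut TYPE('a) (pneg p (Join (Var x) (Imp (Var x) Zero)))"
    by (rule ev_taut_partition) auto
  then show "partition_taut TYPE('a) (Join (Imp (Var x) (Var p)) (Imp (Imp (Var x) (Var p)) (Var p)))"
    by simp
qed

end
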